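(* In the setting described in the context, the sequence $\hat\zeta_n:=\sum_{k=0}^{n-1}a(k)\hat M_{k+1}$, $n\ge1$, converges almost surely.
   Context: Setting. $S$ is a compact metric space; $h:\mathbb{R}^d\times S\to\mathbb{R}^d$ is jointly continuous and there is $L>0$ with $\lVert h(x_1,y)-h(x_2,y)\rVert\le L\lVert x_1-x_2\rVert$ for all $x_1,x_2,y$. Step sizes $a(n)>0$ satisfy $\sum_n a(n)=\infty$, $\sum_n a(n)^2<\infty$, $\sup_n a(n)\le1$. On a probability space with filtration $\{\mathcal{F}_n\}$, $\{y_n\}_{n\ge0}$ is an $S$-valued adapted process, $x_0$ is $\mathcal{F}_0$-measurable, $\{M_n\}_{n\ge1}$ is a square-integrable martingale difference sequence ($M_{n+1}$ is $\mathcal{F}_{n+1}$-measurable, $E[M_{n+1}\mid\mathcal{F}_n]=0$) with $E[\lVert M_{n+1}\rVert^2\mid\mathcal{F}_n]\le K(1+\lVert x_n\rVert^2)$ for some constant $K>0$, and $x_{n+1}=x_n+a(n)[h(x_n,y_n)+M_{n+1}]$. Rescaling. Fix $T>0$. Let $t(0)=0$, $t(n)=\sum_{i=0}^{n-1}a(i)$; let $\bar x$ be the piecewise linear interpolation with $\bar x(t(n))=x_n$. Let $T_0=0$, $T_n=\min\{t(m):t(m)\ge T_{n-1}+T\}$, $r(n)=\lVert\bar x(T_n)\rVert\vee1$, and $\hat M_{k+1}=M_{k+1}/r(n)$ when $t(k)\in[T_n,T_{n+1})$. *)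

theory Defs
  imports "HOL-Analysis.Analysis" "HOL-Probability.Probability"
begin

definition tseq :: "(nat \<Rightarrow> real) \<Rightarrow> nat \<Rightarrow> real" where
  "tseq a n = (\<Sum>i<n. a i)"

definition xbar :: "(nat \<Rightarrow> real) \<Rightarrow> (nat \<Rightarrow> 'd::real_normed_vector) \<Rightarrow> real \<Rightarrow> 'd" where
  "xbar a x s = (let n = (GREATEST n. tseq a n \<le> s)
                 in x n + ((s - tseq a n) / a n) *\<^sub>R (x (Suc n) - x n))"

primrec Tseq :: "(nat \<Rightarrow> real) \<Rightarrow> real \<Rightarrow> nat \<Rightarrow> real" where
  "Tseq a T 0 = 0"
| "Tseq a T (Suc n) = Inf {tseq a m | m. tseq a m \<ge> Tseq a T n + T}"

definition rfac :: "(nat \<Rightarrow> real) \<Rightarrow> real \<Rightarrow> (nat \<Rightarrow> 'd::real_normed_vector) \<Rightarrow> nat \<Rightarrow> real" where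
  "rfac a T x n = max (norm (xbar a x (Tseq a T n))) 1"

definition blk :: "(nat \<Rightarrow> real) \<Rightarrow> real \<Rightarrow> nat \<Rightarrow> nat" where
  "blk a T k = (GREATEST n. Tseq a T n \<le> tseq a k)"

definition Mhat :: "(nat \<Rightarrow> real) \<Rightarrow> real \<Rightarrow> (nat \<Rightarrow> 'd::real_normed_vector) \<Rightarrow> (nat \<Rightarrow> 'd) \<Rightarrow> nat \<Rightarrow> 'd" where
  "Mhat a T x M k = (1 / rfac a T x (blk a T k)) *\<^sub>R M (Suc k)"
  (* Mhat a T x M k stands for hat M_(k+1) *)

definition zeta_hat :: "(nat \<Rightarrow> real) \<Rightarrow> real \<Rightarrow> (nat \<Rightarrow> 'd::real_normed_vector) \<Rightarrow> (nat \<Rightarrow> 'd) \<Rightarrow> nat \<Rightarrow> 'd" where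
  "zeta_hat a T x M n = (\<Sum>k<n. a k *\<^sub>R Mhat a T x M k)"

end

theory Submission
  imports Defs
begin


locale stepsz =
  fixes a :: "nat \<Rightarrow> real" and T :: real
  assumes a_pos: "\<And>n. a n > 0" and a_div: "\<not> summable a"
    and a_le1: "\<And>n. a n \<le> 1" and T_pos: "T > 0"
begin

lemma tseq_0[simp]: "tseq a 0 = 0" by (simp add: tseq_def)
lemma tseq_Suc: "tseq a (Suc n) = tseq a n + a n" by (simp add: tseq_def)

lemma tseq_strict: "strict_mono (tseq a)"
  by (rule strict_monoI_Suc) (simp add: tseq_Suc a_pos)

lemma tseq_less_iff[simp]: "tseq a i < tseq a j \<longleftrightarrow> i < j"
  using tseq_strict by (simp add: strict_mono_less)
lemma tseq_le_iff[simp]: "tseq a i \<le> tseq a j \<longleftrightarrow> i \<le> j"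
  using tseq_strict by (simp add: strict_mono_less_eq)
lemma tseq_eq_iff[simp]: "tseq a i = tseq a j \<longleftrightarrow> i = j"
  using tseq_strict by (meson strict_mono_eq)

lemma tseq_nonneg: "0 \<le> tseq a n"
  using tseq_le_iff[of 0 n] by simp

lemma tseq_unbounded: "\<exists>n. B < tseq a n"
proof (rule ccontr)
  assume "\<not> ?thesis"
  hence "\<And>n. tseq a n \<le> B" by (simp add: not_less)
  hence "\<And>n. sum a {..n} \<le> B" by (metis lessThan_Suc_atMost tseq_def)
  hence "summable a" by (rule bounded_imp_summable[rotated]) (simp add: a_pos less_imp_le)
  with a_div show False by simp
qed

lemma Tseq_Suc_eq: "\<exists>m. Tseq a T (Suc n) = tseq a m \<and> Tseq a T n + T \<le> tseq a m
   \<and> (\<forall>m'<m. tseq a m' < Tseq a T n + T)"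
proof -
  define P where "P m = (Tseq a T n + T \<le> tseq a m)" for m
  obtain m1 where "P m1" using tseq_unbounded[of "Tseq a T n + T"] unfolding P_def by (meson less_imp_le)
  define m0 where "m0 = (LEAST m. P m)"
  have P0: "P m0" unfolding m0_def by (rule LeastI) fact
  have lt: "\<And>m'. m' < m0 \<Longrightarrow> \<not> P m'" unfolding m0_def by (rule not_less_Least)
  have "Tseq a T (Suc n) = Inf {tseq a m | m. P m}" by (simp add: P_def)
  also have "\<dots> = tseq a m0"
  proof (rule cInf_eq_minimum)
    show "tseq a m0 \<in> {tseq a m |m. P m}" using P0 by blast
  next
    fix x assume "x \<in> {tseq a m |m. P m}"
    then obtain m where "x = tseq a m" "P m" by blast
    thus "tseq a m0 \<le> x" using lt by (auto simp: not_less[symmetric])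
  qed
  finally show ?thesis using P0 lt P_def by (auto simp: not_le)
qed

lemma Tseq_step: "Tseq a T n + T \<le> Tseq a T (Suc n)"
  using Tseq_Suc_eq[of n] by auto

lemma Tseq_ge: "real n * T \<le> Tseq a T n"
proof (induction n)
  case (Suc n) thus ?case using Tseq_step[of n] by (simp add: distrib_right)
qed simp

lemma Tseq_nonneg: "0 \<le> Tseq a T n"
  using Tseq_ge[of n] T_pos by (smt (verit) mult_nonneg_nonneg of_nat_0_le_iff)

lemma Tseq_is_tseq: "\<exists>m. Tseq a T n = tseq a m"
proof (cases n)
  case 0 thus ?thesis by (auto intro: exI[of _ 0])
next
  case (Suc n') thus ?thesis using Tseq_Suc_eq[of n'] by auto
qed

lemma Tseq_lt1: "Tseq a T (Suc n) < Tseq a T n + T + 1"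
proof -
  obtain m where m: "Tseq a T (Suc n) = tseq a m" "Tseq a T n + T \<le> tseq a m"
     "\<forall>m'<m. tseq a m' < Tseq a T n + T" using Tseq_Suc_eq[of n] by blast
  have "m \<noteq> 0"
  proof
    assume "m = 0" thus False using m(2) T_pos Tseq_nonneg[of n] by simp
  qed
  then obtain m' where mm: "m = Suc m'" by (cases m) auto
  have "tseq a m' < Tseq a T n + T" using m(3) mm by simp
  thus ?thesis using m(1) mm tseq_Suc[of m'] a_le1[of m'] by simp
qed

lemma Tseq_strict: "strict_mono (Tseq a T)"
  by (rule strict_monoI_Suc) (smt (verit) Tseq_step T_pos)

lemma blk_props: "Tseq a T (blk a T k) \<le> tseq a k \<and> tseq a k < Tseq a T (Suc (blk a T k))"
proof -
  define P where "P n = (Tseq a T n \<le> tseq a k)" for n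
  have bnd: "n \<le> nat \<lceil>tseq a k / T\<rceil>" if "P n" for n
  proof -
    have "real n * T \<le> tseq a k" using Tseq_ge[of n] that P_def by simp
    hence "real n \<le> tseq a k / T" using T_pos by (simp add: field_simps)
    thus ?thesis by linarith
  qed
  have P0: "P 0" by (simp add: P_def tseq_nonneg)
  have "P (Greatest P)" by (rule GreatestI_ex_nat[OF _ bnd]) (use P0 in blast)
  moreover have "\<not> P (Suc (Greatest P))"
  proof
    assume "P (Suc (Greatest P))"
    hence "Suc (Greatest P) \<le> Greatest P" by (rule Greatest_le_nat[OF _ bnd])
    thus False by simp
  qed
  ultimately show ?thesis unfolding blk_def P_def by auto
qed

lemma blk_ge: "Tseq a T n \<le> tseq a k \<Longrightarrow> n \<le> blk a T k"
proof -
  assume h: "Tseq a T n \<le> tseq a k"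
  have "\<not> blk a T k < n"
  proof
    assume "blk a T k < n"
    hence "Suc (blk a T k) \<le> n" by simp
    hence "Tseq a T (Suc (blk a T k)) \<le> Tseq a T n" by (meson Tseq_strict strict_mono_less_eq)
    thus False using blk_props[of k] h by simp
  qed
  thus ?thesis by simp
qed

lemma blk_mono: "blk a T k \<le> blk a T (Suc k)"
  by (rule blk_ge) (smt (verit) blk_props tseq_Suc a_pos)

lemma blk_change: "blk a T (Suc k) \<noteq> blk a T k \<Longrightarrow> Tseq a T (blk a T (Suc k)) = tseq a (Suc k)"
proof -
  assume ne: "blk a T (Suc k) \<noteq> blk a T k"
  hence lt: "Suc (blk a T k) \<le> blk a T (Suc k)" using blk_mono[of k] by simp
  obtain m where m: "Tseq a T (blk a T (Suc k)) = tseq a m" using Tseq_is_tseq by blast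
  have "tseq a k < Tseq a T (blk a T (Suc k))"
    using blk_props[of k] lt Tseq_strict by (smt (verit) strict_mono_less_eq)
  hence "k < m" using m by simp
  moreover have "m \<le> Suc k" using blk_props[of "Suc k"] m by simp
  ultimately show ?thesis using m by (metis le_antisym Suc_leI)
qed

lemma blk_start: "\<exists>m\<le>k. Tseq a T (blk a T k) = tseq a m"
  using Tseq_is_tseq[of "blk a T k"] blk_props[of k] by force

lemma blk_len: "tseq a k - Tseq a T (blk a T k) \<le> T + 1"
  using blk_props[of k] Tseq_lt1[of "blk a T k"] by simp

lemma xbar_tseq: "xbar a x (tseq a m) = x m"
proof -
  have "(GREATEST n. tseq a n \<le> tseq a m) = m"
    by (rule Greatest_equality) auto
  thus ?thesis by (simp add: xbar_def Let_def)
qed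

lemma rfac_blk: "\<exists>m\<le>k. \<forall>x. rfac a T x (blk a T k) = max (norm (x m)) 1"
  using blk_start[of k] by (auto simp: rfac_def xbar_tseq)

lemma rfac_change: "blk a T (Suc k) \<noteq> blk a T k \<Longrightarrow> rfac a T x (blk a T (Suc k)) = max (norm (x (Suc k))) 1"
  using blk_change by (simp add: rfac_def xbar_tseq)

end



lemma sq_int_mult:
  fixes f g :: "'w \<Rightarrow> real"
  assumes "integrable M (\<lambda>x. (f x)\<^sup>2)" "integrable M (\<lambda>x. (g x)\<^sup>2)"
    "f \<in> borel_measurable M" "g \<in> borel_measurable M"
  shows "integrable M (\<lambda>x. f x * g x)"
proof (rule Bochner_Integration.integrable_bound[of _ "\<lambda>x. (f x)\<^sup>2 + (g x)\<^sup>2"])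
  show "integrable M (\<lambda>x. (f x)\<^sup>2 + (g x)\<^sup>2)" using assms by auto
  show "(\<lambda>x. f x * g x) \<in> borel_measurable M" using assms by measurable
  show "AE x in M. norm (f x * g x) \<le> norm ((f x)\<^sup>2 + (g x)\<^sup>2)"
  proof (intro AE_I2)
    fix x
    have "0 \<le> (\<bar>f x\<bar> - \<bar>g x\<bar>)\<^sup>2" by simp
    hence h: "0 \<le> (f x)\<^sup>2 + (g x)\<^sup>2 - 2 * (\<bar>f x\<bar> * \<bar>g x\<bar>)"
      unfolding power2_diff power2_abs by (simp add: mult.assoc)
    have "0 \<le> \<bar>f x\<bar> * \<bar>g x\<bar>" by simp
    hence "\<bar>f x\<bar> * \<bar>g x\<bar> \<le> (f x)\<^sup>2 + (g x)\<^sup>2" using h by linarith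
    moreover have "0 \<le> (f x)\<^sup>2 + (g x)\<^sup>2" by simp
    ultimately show "norm (f x * g x) \<le> norm ((f x)\<^sup>2 + (g x)\<^sup>2)"
      by (simp add: abs_mult)
  qed
qed

locale mdiff =
  fixes P :: "'w measure" and G :: "nat \<Rightarrow> 'w measure" and d :: "nat \<Rightarrow> 'w \<Rightarrow> real"
  assumes prob: "prob_space P"
   and sub: "\<And>k. subalgebra P (G k)"
   and Gmono: "\<And>i j. i \<le> j \<Longrightarrow> sets (G i) \<subseteq> sets (G j)"
   and dmeas: "\<And>k. d k \<in> borel_measurable (G (Suc k))"
   and dsq: "\<And>k. integrable P (\<lambda>\<omega>. (d k \<omega>)\<^sup>2)"
   and orth: "\<And>k g. g \<in> borel_measurable (G k) \<Longrightarrow> integrable P (\<lambda>\<omega>. g \<omega> * d k \<omega>)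
        \<Longrightarrow> (\<integral>\<omega>. g \<omega> * d k \<omega> \<partial>P) = 0"
begin

definition S :: "nat \<Rightarrow> 'w \<Rightarrow> real" where "S n \<omega> = (\<Sum>k<n. d k \<omega>)"

lemma meas_mono: "i \<le> j \<Longrightarrow> f \<in> borel_measurable (G i) \<Longrightarrow> f \<in> borel_measurable (G j)"
  by (rule measurable_from_subalg[of "G j" "G i"])
     (use sub Gmono in \<open>auto simp: subalgebra_def\<close>)

lemma toP: "f \<in> borel_measurable (G i) \<Longrightarrow> f \<in> borel_measurable P"
  using measurable_from_subalg sub by blast

lemma space_G: "space (G i) = space P" using sub by (simp add: subalgebra_def)

lemma dP[measurable]: "d k \<in> borel_measurable P" using toP dmeas by blast

lemma S_meas: "j \<le> n \<Longrightarrow> S j \<in> borel_measurable (G n)"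
  unfolding S_def
  by (rule borel_measurable_sum) (meson dmeas meas_mono lessThan_iff Suc_leI le_trans)

lemma SP[measurable]: "S j \<in> borel_measurable P" using S_meas toP by blast

lemma S_sq: "integrable P (\<lambda>\<omega>. (S n \<omega>)\<^sup>2) \<and> (\<integral>\<omega>. (S n \<omega>)\<^sup>2 \<partial>P) = (\<Sum>k<n. \<integral>\<omega>. (d k \<omega>)\<^sup>2 \<partial>P)"
proof (induction n)
  case 0 thus ?case by (simp add: S_def)
next
  case (Suc n)
  have i1: "integrable P (\<lambda>\<omega>. S n \<omega> * d n \<omega>)"
    by (rule sq_int_mult) (use Suc dsq in auto)
  have z: "(\<integral>\<omega>. S n \<omega> * d n \<omega> \<partial>P) = 0" by (rule orth[OF S_meas i1]) simp
  have eq: "(\<lambda>\<omega>. (S (Suc n) \<omega>)\<^sup>2) = (\<lambda>\<omega>. (S n \<omega>)\<^sup>2 + 2 * (S n \<omega> * d n \<omega>) + (d n \<omega>)\<^sup>2)"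
    by (simp add: S_def power2_eq_square algebra_simps)
  show ?case unfolding eq using Suc i1 dsq[of n] z by simp
qed

lemma S_diff: "j \<le> n \<Longrightarrow> S n \<omega> - S j \<omega> = (\<Sum>k\<in>{j..<n}. d k \<omega>)"
  unfolding S_def using sum.atLeastLessThan_concat[of 0 j n "\<lambda>k. d k \<omega>"]
  by (simp add: atLeast0LessThan)

lemma kolmogorov:
  assumes eps: "\<epsilon> > 0"
  shows "measure P {\<omega> \<in> space P. \<exists>j\<le>n. \<epsilon> \<le> \<bar>S j \<omega>\<bar>} \<le> (\<Sum>k<n. \<integral>\<omega>. (d k \<omega>)\<^sup>2 \<partial>P) / \<epsilon>\<^sup>2"
proof -
  interpret prob_space P by (rule prob)
  define A where "A j = {\<omega> \<in> space P. \<epsilon> \<le> \<bar>S j \<omega>\<bar> \<and> (\<forall>i<j. \<bar>S i \<omega>\<bar> < \<epsilon>)}" for j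
  define E where "E = {\<omega> \<in> space P. \<exists>j\<le>n. \<epsilon> \<le> \<bar>S j \<omega>\<bar>}"
  have AG: "A j \<in> sets (G j)" for j
  proof -
    have [measurable]: "\<And>i. i \<le> j \<Longrightarrow> S i \<in> borel_measurable (G j)" using S_meas by blast
    have "A j = {\<omega> \<in> space (G j). \<epsilon> \<le> \<bar>S j \<omega>\<bar> \<and> (\<forall>i<j. \<bar>S i \<omega>\<bar> < \<epsilon>)}"
      by (simp add: A_def space_G)
    also have "\<dots> \<in> sets (G j)" by measurable
    finally show ?thesis .
  qed
  have EP[measurable]: "E \<in> sets P" unfolding E_def by measurable
  define ind where "ind j = (\<lambda>\<omega>. indicator (A j) \<omega> * S j \<omega>)" for j
  have indG: "ind j \<in> borel_measurable (G j)" for j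
    unfolding ind_def using AG S_meas[of j j] by measurable
  have ind_int: "integrable P (\<lambda>\<omega>. ind j \<omega> * d k \<omega>)" for j k
  proof (rule Bochner_Integration.integrable_bound[of _ "\<lambda>\<omega>. S j \<omega> * d k \<omega>"])
    show "integrable P (\<lambda>\<omega>. S j \<omega> * d k \<omega>)"
      by (rule sq_int_mult) (use S_sq dsq in auto)
    show "(\<lambda>\<omega>. ind j \<omega> * d k \<omega>) \<in> borel_measurable P" using toP[OF indG] by measurable
    show "AE x in P. norm (ind j x * d k x) \<le> norm (S j x * d k x)"
      by (auto simp: ind_def indicator_def abs_mult)
  qed
  define Z where "Z \<omega> = (\<Sum>j\<le>n. \<Sum>k\<in>{j..<n}. ind j \<omega> * d k \<omega>)" for \<omega>
  have Zint: "integrable P Z" unfolding Z_def using ind_int by auto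
  have Z0: "(\<integral>\<omega>. Z \<omega> \<partial>P) = 0"
  proof -
    have "(\<integral>\<omega>. Z \<omega> \<partial>P) = (\<Sum>j\<le>n. \<Sum>k\<in>{j..<n}. \<integral>\<omega>. ind j \<omega> * d k \<omega> \<partial>P)"
      unfolding Z_def using ind_int by (simp add: Bochner_Integration.integral_sum)
    also have "\<dots> = 0"
    proof (intro sum.neutral ballI)
      fix j k assume "k \<in> {j..<n}"
      hence "j \<le> k" by simp
      thus "(\<integral>\<omega>. ind j \<omega> * d k \<omega> \<partial>P) = 0"
        using orth[OF meas_mono[OF _ indG] ind_int] by blast
    qed
    finally show ?thesis .
  qed
  have pw: "\<epsilon>\<^sup>2 * indicator E \<omega> + 2 * Z \<omega> \<le> (S n \<omega>)\<^sup>2" if \<omega>: "\<omega> \<in> space P" for \<omega>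
  proof -
    have Zeq: "Z \<omega> = (\<Sum>j\<le>n. indicator (A j) \<omega> * (S j \<omega> * (S n \<omega> - S j \<omega>)))"
      unfolding Z_def ind_def
      by (intro sum.cong refl) (simp add: S_diff sum_distrib_left mult.assoc)
    show ?thesis
    proof (cases "\<omega> \<in> E")
      case False
      hence "\<And>j. j \<le> n \<Longrightarrow> \<omega> \<notin> A j" by (auto simp: A_def E_def)
      thus ?thesis using False Zeq by simp
    next
      case True
      define j0 where "j0 = (LEAST j. \<epsilon> \<le> \<bar>S j \<omega>\<bar>)"
      obtain j1 where j1: "j1 \<le> n" "\<epsilon> \<le> \<bar>S j1 \<omega>\<bar>" using True E_def by blast
      have j0a: "\<epsilon> \<le> \<bar>S j0 \<omega>\<bar>" unfolding j0_def by (rule LeastI) (rule j1(2))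
      have j0b: "j0 \<le> n" using Least_le[of "\<lambda>j. \<epsilon> \<le> \<bar>S j \<omega>\<bar>", OF j1(2)] j1(1) j0_def by simp
      have j0c: "\<And>i. i < j0 \<Longrightarrow> \<bar>S i \<omega>\<bar> < \<epsilon>" unfolding j0_def using not_less_Least by fastforce
      have inA: "\<omega> \<in> A j0" using \<omega> j0a j0c by (simp add: A_def)
      have notA: "\<And>j. j \<noteq> j0 \<Longrightarrow> \<omega> \<notin> A j"
      proof
        fix j assume "j \<noteq> j0" "\<omega> \<in> A j"
        hence "\<epsilon> \<le> \<bar>S j \<omega>\<bar>" "\<forall>i<j. \<bar>S i \<omega>\<bar> < \<epsilon>" by (auto simp: A_def)
        show False
        proof (cases "j < j0")
          case True thus False using j0c[of j] \<open>\<epsilon> \<le> \<bar>S j \<omega>\<bar>\<close> by simp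
        next
          case False hence "j0 < j" using \<open>j \<noteq> j0\<close> by simp
          thus False using \<open>\<forall>i<j. \<bar>S i \<omega>\<bar> < \<epsilon>\<close> j0a by fastforce
        qed
      qed
      have "Z \<omega> = S j0 \<omega> * (S n \<omega> - S j0 \<omega>)"
        unfolding Zeq by (subst sum.remove[of _ j0]) (use j0b inA notA in auto)
      moreover have "\<epsilon>\<^sup>2 \<le> (S j0 \<omega>)\<^sup>2" using abs_le_square_iff[of \<epsilon> "S j0 \<omega>"] j0a eps by simp
      moreover have "0 \<le> (S n \<omega> - S j0 \<omega>)\<^sup>2" by simp
      ultimately show ?thesis using True by (simp add: power2_eq_square algebra_simps)
    qed
  qed
  have "(\<integral>\<omega>. \<epsilon>\<^sup>2 * indicator E \<omega> + 2 * Z \<omega> \<partial>P) \<le> (\<integral>\<omega>. (S n \<omega>)\<^sup>2 \<partial>P)"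
  proof (rule integral_mono)
    show "integrable P (\<lambda>\<omega>. \<epsilon>\<^sup>2 * indicator E \<omega> + 2 * Z \<omega>)"
      using Zint EP by (auto intro!: integrable_real_indicator simp: emeasure_eq_measure)
  qed (use S_sq pw in auto)
  moreover have "(\<integral>\<omega>. \<epsilon>\<^sup>2 * indicator E \<omega> + 2 * Z \<omega> \<partial>P) = \<epsilon>\<^sup>2 * measure P E"
  proof -
    have ii: "integrable P (\<lambda>\<omega>. \<epsilon>\<^sup>2 * indicator E \<omega>)"
      using EP by (auto intro!: integrable_real_indicator simp: emeasure_eq_measure)
    have "(\<integral>\<omega>. \<epsilon>\<^sup>2 * indicator E \<omega> + 2 * Z \<omega> \<partial>P)
        = (\<integral>\<omega>. \<epsilon>\<^sup>2 * indicator E \<omega> \<partial>P) + (\<integral>\<omega>. 2 * Z \<omega> \<partial>P)"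
      by (rule Bochner_Integration.integral_add) (use ii Zint in auto)
    also have "\<dots> = \<epsilon>\<^sup>2 * measure P E" using Z0 EP by (simp add: integral_indicator)
    finally show ?thesis .
  qed
  ultimately have "\<epsilon>\<^sup>2 * measure P E \<le> (\<Sum>k<n. \<integral>\<omega>. (d k \<omega>)\<^sup>2 \<partial>P)" using S_sq by simp
  moreover have "\<epsilon>\<^sup>2 > 0" using eps by simp
  ultimately have "measure P E \<le> (\<Sum>k<n. \<integral>\<omega>. (d k \<omega>)\<^sup>2 \<partial>P) / \<epsilon>\<^sup>2"
    by (metis pos_le_divide_eq mult.commute)
  thus ?thesis unfolding E_def .
qed


lemma shift: "mdiff P (\<lambda>k. G (m+k)) (\<lambda>k. d (m+k))"
proof (rule mdiff.intro)
  show "prob_space P" by (rule prob)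
  show "subalgebra P (G (m+k))" for k by (rule sub)
  show "i \<le> j \<Longrightarrow> sets (G (m+i)) \<subseteq> sets (G (m+j))" for i j by (rule Gmono) simp
  show "d (m+k) \<in> borel_measurable (G (m + Suc k))" for k using dmeas[of "m+k"] by simp
  show "integrable P (\<lambda>\<omega>. (d (m+k) \<omega>)\<^sup>2)" for k by (rule dsq)
  show "g \<in> borel_measurable (G (m+k)) \<Longrightarrow> integrable P (\<lambda>\<omega>. g \<omega> * d (m+k) \<omega>)
        \<Longrightarrow> (\<integral>\<omega>. g \<omega> * d (m+k) \<omega> \<partial>P) = 0" for k g by (rule orth)
qed

lemma S_shift: "(\<Sum>k<j. d (m+k) \<omega>) = S (m+j) \<omega> - S m \<omega>"
  by (induction j) (simp_all add: S_def)

lemma ae_conv: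
  assumes summ: "summable (\<lambda>k. \<integral>\<omega>. (d k \<omega>)\<^sup>2 \<partial>P)"
  shows "AE \<omega> in P. convergent (\<lambda>n. S n \<omega>)"
proof -
  interpret prob_space P by (rule prob)
  define V where "V k = (\<integral>\<omega>. (d k \<omega>)\<^sup>2 \<partial>P)" for k
  have V0: "0 \<le> V k" for k unfolding V_def by simp
  have step: "AE \<omega> in P. \<exists>m. \<forall>j. \<bar>S (m+j) \<omega> - S m \<omega>\<bar> < \<epsilon>" if eps: "\<epsilon> > 0" for \<epsilon>
  proof (rule AE_I')
    define N where "N = {\<omega> \<in> space P. \<forall>m. \<exists>j. \<epsilon> \<le> \<bar>S (m+j) \<omega> - S m \<omega>\<bar>}"
    show "{\<omega> \<in> space P. \<not> (\<exists>m. \<forall>j. \<bar>S (m+j) \<omega> - S m \<omega>\<bar> < \<epsilon>)} \<subseteq> N"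
      by (auto simp: N_def not_less)
    have NP[measurable]: "N \<in> sets P" unfolding N_def by measurable
    have bnd: "measure P N \<le> (\<Sum>k. V (k+m)) / \<epsilon>\<^sup>2" for m
    proof -
      interpret sh: mdiff P "\<lambda>k. G (m+k)" "\<lambda>k. d (m+k)" by (rule shift)
      define C where "C n = {\<omega> \<in> space P. \<exists>j\<le>n. \<epsilon> \<le> \<bar>sh.S j \<omega>\<bar>}" for n
      have CP: "range C \<subseteq> sets P" unfolding C_def by auto
      have Cinc: "incseq C" unfolding C_def incseq_def by (auto intro: order_trans)
      have lim: "(\<lambda>n. measure P (C n)) \<longlonglongrightarrow> measure P (\<Union>(range C))"
        by (rule finite_measure.finite_Lim_measure_incseq[OF _ CP Cinc]) unfold_locales
      have sm: "summable (\<lambda>k. V (k+m))" using summ unfolding V_def by (rule summable_ignore_initial_segment)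
      have "measure P (C n) \<le> (\<Sum>k. V (k+m)) / \<epsilon>\<^sup>2" for n
      proof -
        have "measure P (C n) \<le> (\<Sum>k<n. V (m+k)) / \<epsilon>\<^sup>2"
          unfolding C_def V_def by (rule sh.kolmogorov[OF eps])
        also have "(\<Sum>k<n. V (m+k)) \<le> (\<Sum>k. V (k+m))"
          using sum_le_suminf[OF sm, of "{..<n}"] V0 by (simp add: add.commute)
        hence "(\<Sum>k<n. V (m+k)) / \<epsilon>\<^sup>2 \<le> (\<Sum>k. V (k+m)) / \<epsilon>\<^sup>2"
          by (simp add: divide_right_mono)
        finally show ?thesis .
      qed
      hence "measure P (\<Union>(range C)) \<le> (\<Sum>k. V (k+m)) / \<epsilon>\<^sup>2"
        by (intro LIMSEQ_le_const2[OF lim]) auto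
      moreover have "N \<subseteq> \<Union>(range C)"
        unfolding N_def C_def sh.S_def by (auto simp: S_shift) blast
      moreover have "\<Union>(range C) \<in> sets P" using CP by auto
      ultimately show ?thesis using NP by (meson finite_measure_mono order_trans)
    qed
    have "(\<lambda>m. (\<Sum>k. V (k+m)) / \<epsilon>\<^sup>2) \<longlonglongrightarrow> 0 / \<epsilon>\<^sup>2"
    proof -
      have "(\<lambda>m. \<Sum>k. V (k+m)) \<longlonglongrightarrow> 0" using suminf_exist_split2[OF summ] unfolding V_def .
      thus ?thesis by (intro tendsto_divide tendsto_const) (use eps in auto)
    qed
    hence "measure P N \<le> 0" using bnd by (intro LIMSEQ_le_const[of _ 0]) auto
    hence "measure P N = 0" by (simp add: antisym)
    thus "N \<in> null_sets P" using NP by (simp add: emeasure_eq_measure null_sets_def)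
  qed
  have "AE \<omega> in P. \<forall>p::nat. \<exists>m. \<forall>j. \<bar>S (m+j) \<omega> - S m \<omega>\<bar> < 1 / (Suc p)"
    by (subst AE_all_countable) (auto intro: step)
  thus ?thesis
  proof (rule AE_mp[OF _ AE_I2], intro impI)
    fix \<omega> assume H: "\<forall>p::nat. \<exists>m. \<forall>j. \<bar>S (m+j) \<omega> - S m \<omega>\<bar> < 1 / (Suc p)"
    have "Cauchy (\<lambda>n. S n \<omega>)"
    proof (rule metric_CauchyI)
      fix e :: real assume "e > 0"
      then obtain p :: nat where p: "2 / e < Suc p" 
      proof -
        obtain q :: nat where "2 / e < q" using reals_Archimedean2 by blast
        hence "2 / e < Suc q" by linarith
        thus ?thesis using that by blast
      qed
      hence p2: "2 * (1 / Suc p) < e" using \<open>e>0\<close> by (simp add: field_simps)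
      obtain m where m: "\<forall>j. \<bar>S (m+j) \<omega> - S m \<omega>\<bar> < 1 / (Suc p)" using H by blast
      have "dist (S i \<omega>) (S j \<omega>) < e" if "i \<ge> m" "j \<ge> m" for i j
      proof -
        have "\<bar>S i \<omega> - S m \<omega>\<bar> < 1 / (Suc p)" using m[rule_format, of "i - m"] that by simp
        moreover have "\<bar>S j \<omega> - S m \<omega>\<bar> < 1 / (Suc p)" using m[rule_format, of "j - m"] that by simp
        ultimately show ?thesis using p2 by (simp add: dist_real_def)
      qed
      thus "\<exists>M. \<forall>m\<ge>M. \<forall>n\<ge>M. dist (S m \<omega>) (S n \<omega>) < e" by blast
    qed
    thus "convergent (\<lambda>n. S n \<omega>)" by (simp add: Cauchy_convergent_iff)
  qed
qed

end



definition qgrid :: "nat \<Rightarrow> 'd::euclidean_space \<Rightarrow> 'd" where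
  "qgrid j u = (\<Sum>i\<in>Basis. (of_int \<lfloor>real (Suc j) * (u \<bullet> i)\<rfloor> / real (Suc j)) *\<^sub>R i)"

lemma qgrid_meas[measurable]: "qgrid j \<in> borel_measurable borel"
  unfolding qgrid_def by measurable

lemma qgrid_err: "norm (qgrid j u - u) \<le> real DIM('d) / real (Suc j)" for u :: "'d::euclidean_space"
proof -
  have "qgrid j u - u = (\<Sum>i\<in>Basis. (of_int \<lfloor>real (Suc j) * (u \<bullet> i)\<rfloor> / real (Suc j) - u \<bullet> i) *\<^sub>R i)"
    unfolding qgrid_def
    by (subst (2) euclidean_representation[symmetric]) (simp add: sum_subtractf scaleR_diff_left)
  also have "norm \<dots> \<le> (\<Sum>i\<in>(Basis::'d set). norm ((of_int \<lfloor>real (Suc j) * (u \<bullet> i)\<rfloor> / real (Suc j) - u \<bullet> i) *\<^sub>R i))"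
    by (rule norm_sum)
  also have "\<dots> \<le> (\<Sum>i\<in>(Basis::'d set). 1 / real (Suc j))"
  proof (rule sum_mono)
    fix i :: 'd assume "i \<in> Basis"
    define s where "s = real (Suc j) * (u \<bullet> i)"
    have f1: "of_int \<lfloor>s\<rfloor> \<le> s" "s < of_int \<lfloor>s\<rfloor> + 1" by linarith+
    have "u \<bullet> i = s / real (Suc j)" unfolding s_def by simp
    hence eqq: "\<bar>of_int \<lfloor>s\<rfloor> / real (Suc j) - u \<bullet> i\<bar> = \<bar>of_int \<lfloor>s\<rfloor> - s\<bar> / real (Suc j)"
      by (simp add: diff_divide_distrib[symmetric])
    have "\<bar>of_int \<lfloor>s\<rfloor> - s\<bar> \<le> 1" using f1 by linarith
    hence "\<bar>of_int \<lfloor>s\<rfloor> - s\<bar> / real (Suc j) \<le> 1 / real (Suc j)" by (intro divide_right_mono) auto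
    hence "\<bar>of_int \<lfloor>s\<rfloor> / real (Suc j) - u \<bullet> i\<bar> \<le> 1 / real (Suc j)" using eqq by simp
    thus "norm ((of_int \<lfloor>real (Suc j) * (u \<bullet> i)\<rfloor> / real (Suc j) - u \<bullet> i) *\<^sub>R i) \<le> 1 / real (Suc j)"
      using \<open>i \<in> Basis\<close> by (simp add: s_def)
  qed
  also have "\<dots> = real DIM('d) / real (Suc j)" by simp
  finally show ?thesis .
qed

lemma qgrid_lim: "(\<lambda>j. qgrid j u) \<longlonglongrightarrow> u" for u :: "'d::euclidean_space"
proof (rule metric_tendsto_imp_tendsto)
  show "(\<lambda>j. real DIM('d) / real (Suc j)) \<longlonglongrightarrow> 0"
    using LIMSEQ_Suc[OF lim_const_over_n[of "real DIM('d)"]] by simp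
  show "\<forall>\<^sub>F j in sequentially. dist (qgrid j u) u \<le> dist (real DIM('d) / real (Suc j)) 0"
  proof (intro always_eventually allI)
    fix j show "dist (qgrid j u) u \<le> dist (real DIM('d) / real (Suc j)) 0"
      using qgrid_err[of j u] by (simp add: dist_norm)
  qed
qed

lemma qgrid_countable: "countable (range (qgrid j :: 'd::euclidean_space \<Rightarrow> 'd))"
proof -
  define g where "g f = (\<Sum>i\<in>(Basis::'d set). (of_int (f i) / real (Suc j)) *\<^sub>R i)" for f :: "'d \<Rightarrow> int"
  have "range (qgrid j :: 'd \<Rightarrow> 'd) \<subseteq> g ` (Basis \<rightarrow>\<^sub>E UNIV)"
  proof
    fix v assume "v \<in> range (qgrid j :: 'd \<Rightarrow> 'd)"
    then obtain u where u: "v = qgrid j u" by blast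
    have "v = g (restrict (\<lambda>i. \<lfloor>real (Suc j) * (u \<bullet> i)\<rfloor>) Basis)"
      unfolding u g_def qgrid_def by (intro sum.cong) auto
    thus "v \<in> g ` (Basis \<rightarrow>\<^sub>E UNIV)" by (rule image_eqI[where f=g]) simp
  qed
  moreover have "countable (g ` (Basis \<rightarrow>\<^sub>E UNIV))"
    by (intro countable_image countable_PiE) auto
  ultimately show ?thesis by (rule countable_subset)
qed

lemma meas_h:
  fixes h :: "'d::euclidean_space \<Rightarrow> 's::metric_space \<Rightarrow> 'e::real_normed_vector"
  assumes cont: "continuous_on (UNIV \<times> S) (\<lambda>(u, v). h u v)"
   and lip: "\<And>x1 x2 v. v \<in> S \<Longrightarrow> norm (h x1 v - h x2 v) \<le> L * norm (x1 - x2)"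
   and X: "X \<in> borel_measurable M" and Y: "Y \<in> measurable M borel"
   and YS: "\<And>\<omega>. \<omega> \<in> space M \<Longrightarrow> Y \<omega> \<in> S"
  shows "(\<lambda>\<omega>. h (X \<omega>) (Y \<omega>)) \<in> borel_measurable M"
proof -
  have fixc: "(\<lambda>\<omega>. h c (Y \<omega>)) \<in> borel_measurable M" for c
  proof -
    have "continuous_on S (\<lambda>v. (\<lambda>(u, v). h u v) (c, v))"
      by (rule continuous_on_compose2[OF cont]) (auto intro!: continuous_intros)
    hence "h c \<in> borel_measurable (restrict_space borel S)"
      by (intro borel_measurable_continuous_on_restrict) simp
    moreover have "Y \<in> measurable M (restrict_space borel S)"
      by (rule measurable_restrict_space2) (use YS Y in auto)
    ultimately show ?thesis by (rule measurable_compose[rotated])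
  qed
  have approx: "(\<lambda>\<omega>. h (qgrid j (X \<omega>)) (Y \<omega>)) \<in> borel_measurable M" for j
  proof (rule measurable_compose_countable'[where I="range (qgrid j)"])
    show "(\<lambda>\<omega>. h c (Y \<omega>)) \<in> borel_measurable M" for c by (rule fixc)
    show "countable (range (qgrid j :: 'd \<Rightarrow> 'd))" by (rule qgrid_countable)
    have qX: "(\<lambda>\<omega>. qgrid j (X \<omega>)) \<in> borel_measurable M" using X by measurable
    show "(\<lambda>\<omega>. qgrid j (X \<omega>)) \<in> M \<rightarrow>\<^sub>M count_space (range (qgrid j))"
    proof -
      have c1: "(\<lambda>\<omega>. qgrid j (X \<omega>)) \<in> space M \<rightarrow> range (qgrid j)" by auto
      have c2: "(\<lambda>\<omega>. qgrid j (X \<omega>)) -` {a} \<inter> space M \<in> sets M" for a :: 'd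
      proof -
        have "(\<lambda>\<omega>. qgrid j (X \<omega>)) -` {a} \<inter> space M = {\<omega> \<in> space M. qgrid j (X \<omega>) = a}" by auto
        also have "\<dots> \<in> sets M" using qX by measurable
        finally show ?thesis .
      qed
      show ?thesis unfolding measurable_count_space_eq_countable[OF qgrid_countable] using c1 c2 by simp
    qed
  qed
  show ?thesis
  proof (rule borel_measurable_LIMSEQ_metric[OF approx])
    fix \<omega> assume \<omega>: "\<omega> \<in> space M"
    show "(\<lambda>j. h (qgrid j (X \<omega>)) (Y \<omega>)) \<longlonglongrightarrow> h (X \<omega>) (Y \<omega>)"
    proof (rule metric_tendsto_imp_tendsto)
      show "(\<lambda>j. L * dist (qgrid j (X \<omega>)) (X \<omega>)) \<longlonglongrightarrow> L * 0"
        by (intro tendsto_mult tendsto_const) (use tendsto_dist[OF qgrid_lim[of "X \<omega>"] tendsto_const[of "X \<omega>"]] in simp)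
      show "\<forall>\<^sub>F j in sequentially. dist (h (qgrid j (X \<omega>)) (Y \<omega>)) (h (X \<omega>) (Y \<omega>))
              \<le> dist (L * dist (qgrid j (X \<omega>)) (X \<omega>)) (L * 0)"
      proof (intro always_eventually allI)
        fix j
        have "norm (h (qgrid j (X \<omega>)) (Y \<omega>) - h (X \<omega>) (Y \<omega>)) \<le> L * norm (qgrid j (X \<omega>) - X \<omega>)"
          by (rule lip[OF YS[OF \<omega>]])
        thus "dist (h (qgrid j (X \<omega>)) (Y \<omega>)) (h (X \<omega>) (Y \<omega>)) \<le> dist (L * dist (qgrid j (X \<omega>)) (X \<omega>)) (L * 0)"
          by (simp add: dist_norm)
      qed
    qed
  qed
qed




lemma pw_bound:
  fixes zk hk mk :: "'d::real_normed_vector"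
  assumes al: "0 \<le> \<alpha>" "\<alpha> \<le> 1" and hb: "norm hk \<le> H0 + L * norm zk" and H0: "0 \<le> H0" and L: "0 \<le> L"
  shows "(norm (zk + \<alpha> *\<^sub>R (hk + mk)))\<^sup>2
     \<le> (1 + \<alpha> * (1 + 6 * L\<^sup>2)) * (norm zk)\<^sup>2 + \<alpha> * (6 * H0\<^sup>2) + \<alpha> * (6 * (norm mk)\<^sup>2)"
proof -
  define p where "p = norm zk"
  define m where "m = norm mk"
  define Q where "Q = H0 + L * p + m"
  have p0: "0 \<le> p" and m0: "0 \<le> m" by (simp_all add: p_def m_def)
  have Q0: "0 \<le> Q" using p0 m0 H0 L by (simp add: Q_def)
  have "norm (zk + \<alpha> *\<^sub>R (hk + mk)) \<le> p + \<alpha> * norm (hk + mk)"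
    using norm_triangle_ineq[of zk "\<alpha> *\<^sub>R (hk + mk)"] al by (simp add: p_def)
  also have "norm (hk + mk) \<le> Q" using norm_triangle_ineq[of hk mk] hb by (simp add: Q_def p_def m_def)
  hence "p + \<alpha> * norm (hk + mk) \<le> p + \<alpha> * Q" using al by (simp add: mult_left_mono)
  finally have n1: "norm (zk + \<alpha> *\<^sub>R (hk + mk)) \<le> p + \<alpha> * Q" .
  hence "(norm (zk + \<alpha> *\<^sub>R (hk + mk)))\<^sup>2 \<le> (p + \<alpha> * Q)\<^sup>2"
    by (intro power_mono) simp_all
  also have "(p + \<alpha> * Q)\<^sup>2 = p\<^sup>2 + \<alpha> * (2 * p * Q) + \<alpha>\<^sup>2 * Q\<^sup>2" by (simp add: power2_eq_square algebra_simps)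
  also have "\<dots> \<le> p\<^sup>2 + \<alpha> * (p\<^sup>2 + Q\<^sup>2) + \<alpha> * Q\<^sup>2"
  proof -
    have "2 * p * Q \<le> p\<^sup>2 + Q\<^sup>2" using sum_squares_bound[of p Q] by simp
    hence "\<alpha> * (2 * p * Q) \<le> \<alpha> * (p\<^sup>2 + Q\<^sup>2)" using al by (simp add: mult_left_mono)
    moreover have "\<alpha>\<^sup>2 * Q\<^sup>2 \<le> \<alpha> * Q\<^sup>2"
      using al by (intro mult_right_mono) (simp_all add: power2_eq_square mult_left_le)
    ultimately show ?thesis by simp
  qed
  also have "Q\<^sup>2 \<le> 3 * (H0\<^sup>2 + L\<^sup>2 * p\<^sup>2 + m\<^sup>2)"
  proof -
    have "0 \<le> (H0 - L*p)\<^sup>2 + (H0 - m)\<^sup>2 + (L*p - m)\<^sup>2" by simp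
    thus ?thesis unfolding Q_def by (simp add: power2_eq_square algebra_simps)
  qed
  hence "p\<^sup>2 + \<alpha> * (p\<^sup>2 + Q\<^sup>2) + \<alpha> * Q\<^sup>2 \<le> p\<^sup>2 + \<alpha> * (p\<^sup>2 + 3 * (H0\<^sup>2 + L\<^sup>2 * p\<^sup>2 + m\<^sup>2)) + \<alpha> * (3 * (H0\<^sup>2 + L\<^sup>2 * p\<^sup>2 + m\<^sup>2))"
    using al by (intro add_mono mult_left_mono) simp_all
  also have "\<dots> = (1 + \<alpha> * (1 + 6 * L\<^sup>2)) * p\<^sup>2 + \<alpha> * (6 * H0\<^sup>2) + \<alpha> * (6 * m\<^sup>2)"
    by (simp add: algebra_simps)
  finally show ?thesis by (simp add: p_def m_def)
qed




lemma filt_mono: "filtration \<Omega> F \<Longrightarrow> i \<le> j \<Longrightarrow> f \<in> measurable (F i) N \<Longrightarrow> f \<in> measurable (F j) N"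
  by (rule measurable_from_subalg[of "F j" "F i"])
     (auto simp: subalgebra_def filtration.space_F filtration.sets_F_mono)

theorem lemma4:
  fixes P :: "'w measure"
    and F :: "nat \<Rightarrow> 'w measure"
    and S :: "'s::metric_space set"
    and h :: "'d::euclidean_space \<Rightarrow> 's \<Rightarrow> 'd"
    and L K T :: real
    and a :: "nat \<Rightarrow> real"
    and x :: "nat \<Rightarrow> 'w \<Rightarrow> 'd"
    and y :: "nat \<Rightarrow> 'w \<Rightarrow> 's"
    and Mn :: "nat \<Rightarrow> 'w \<Rightarrow> 'd"
  assumes S_compact: "compact S"
    and h_cont: "continuous_on (UNIV \<times> S) (\<lambda>(u, v). h u v)"
    and L_pos: "L > 0"
    and h_lip: "\<And>x1 x2 v. v \<in> S \<Longrightarrow> norm (h x1 v - h x2 v) \<le> L * norm (x1 - x2)"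
    and a_pos: "\<And>n. a n > 0"
    and a_div: "\<not> summable a"
    and a_sq: "summable (\<lambda>n. (a n)\<^sup>2)"
    and a_le1: "\<And>n. a n \<le> 1"
    and prob: "prob_space P"
    and filt: "filtration (space P) F"
    and subalg: "\<And>n. subalgebra P (F n)"
    and y_adapted: "\<And>n. y n \<in> measurable (F n) borel"
    and y_in_S: "\<And>n \<omega>. \<omega> \<in> space P \<Longrightarrow> y n \<omega> \<in> S"
    and x0_meas: "x 0 \<in> borel_measurable (F 0)"
    and M_meas: "\<And>n. Mn (Suc n) \<in> borel_measurable (F (Suc n))"
    and M_sqint: "\<And>n. integrable P (\<lambda>\<omega>. (norm (Mn (Suc n) \<omega>))\<^sup>2)"
    and M_mds: "\<And>n i. i \<in> Basis \<Longrightarrow>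
          AE \<omega> in P. real_cond_exp P (F n) (\<lambda>\<omega>. Mn (Suc n) \<omega> \<bullet> i) \<omega> = 0"
    and K_pos: "K > 0"
    and M_var: "\<And>n. AE \<omega> in P. real_cond_exp P (F n) (\<lambda>\<omega>. (norm (Mn (Suc n) \<omega>))\<^sup>2) \<omega>
                    \<le> K * (1 + (norm (x n \<omega>))\<^sup>2)"
    and x_rec: "\<And>n \<omega>. \<omega> \<in> space P \<Longrightarrow>
          x (Suc n) \<omega> = x n \<omega> + a n *\<^sub>R (h (x n \<omega>) (y n \<omega>) + Mn (Suc n) \<omega>)"
    and T_pos: "T > 0"
  shows "AE \<omega> in P. convergent (\<lambda>n. zeta_hat a T (\<lambda>k. x k \<omega>) (\<lambda>k. Mn k \<omega>) n)"
proof -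
  interpret prob_space P by (rule prob)
  interpret stepsz a T by unfold_locales (use a_pos a_div a_le1 T_pos in auto)
  have spF: "\<And>i. space (F i) = space P" using filtration.space_F[OF filt] .
  have FP: "\<And>i f. f \<in> borel_measurable (F i) \<Longrightarrow> f \<in> borel_measurable P"
    using measurable_from_subalg[OF subalg] by blast
  have csub: "sigma_finite_subalgebra P (F i)" for i
    by (intro finite_measure_subalgebra_is_sigma_finite finite_measure_subalgebra.intro)
       (simp_all add: finite_measure_subalgebra_axioms_def subalg finite_measure_axioms)
  have xF: "x k \<in> borel_measurable (F k)" for k
  proof (induction k)
    case 0 show ?case by (rule x0_meas)
  next
    case (Suc k)
    have xk: "x k \<in> borel_measurable (F (Suc k))" using filt_mono[OF filt _ Suc.IH] by simp
    have yk: "y k \<in> borel_measurable (F (Suc k))" using filt_mono[OF filt _ y_adapted[of k]] by simp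
    have hk: "(\<lambda>\<omega>. h (x k \<omega>) (y k \<omega>)) \<in> borel_measurable (F (Suc k))"
      by (rule meas_h[OF h_cont h_lip xk yk]) (simp_all add: spF y_in_S)
    have mg: "(\<lambda>\<omega>. x k \<omega> + a k *\<^sub>R (h (x k \<omega>) (y k \<omega>) + Mn (Suc k) \<omega>)) \<in> borel_measurable (F (Suc k))"
      using xk hk M_meas[of k] by measurable
    show ?case
      by (rule measurable_cong[of "F (Suc k)" "x (Suc k)" "\<lambda>\<omega>. x k \<omega> + a k *\<^sub>R (h (x k \<omega>) (y k \<omega>) + Mn (Suc k) \<omega>)", THEN iffD2])
         (use x_rec spF mg in auto)
  qed
  have xP[measurable]: "x k \<in> borel_measurable P" for k using FP xF by blast
  have MP[measurable]: "Mn (Suc k) \<in> borel_measurable P" for k using FP M_meas by blast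
  define r where "r k \<omega> = rfac a T (\<lambda>j. x j \<omega>) (blk a T k)" for k \<omega>
  obtain mb where mb: "\<And>k. mb k \<le> k" "\<And>k (xx :: nat \<Rightarrow> 'd). rfac a T xx (blk a T k) = max (norm (xx (mb k))) 1"
    using rfac_blk by metis
  have r_eq: "r k \<omega> = max (norm (x (mb k) \<omega>)) 1" for k \<omega> by (simp add: r_def mb)
  have r1: "1 \<le> r k \<omega>" for k \<omega> by (simp add: r_eq)
  have rF: "r k \<in> borel_measurable (F k)" for k
  proof -
    have "x (mb k) \<in> borel_measurable (F k)" using filt_mono[OF filt mb(1) xF] .
    thus ?thesis unfolding r_eq[abs_def] by measurable
  qed
  have rP[measurable]: "r k \<in> borel_measurable P" for k using FP rF by blast
  define z where "z k \<omega> = (1 / r k \<omega>) *\<^sub>R x k \<omega>" for k \<omega>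
  have zP[measurable]: "z k \<in> borel_measurable P" for k unfolding z_def by measurable
  have nz: "norm (z k \<omega>) = norm (x k \<omega>) / r k \<omega>" for k \<omega>
    using r1[of k \<omega>] by (simp add: z_def)
  obtain H0 where H0: "\<And>v. v \<in> S \<Longrightarrow> norm (h 0 v) \<le> H0" and H00: "0 \<le> H0"
  proof -
    have "continuous_on S (\<lambda>v. (\<lambda>(u, v). h u v) (0, v))"
      by (rule continuous_on_compose2[OF h_cont]) (auto intro!: continuous_intros)
    hence "compact (h 0 ` S)" using S_compact by (intro compact_continuous_image) simp
    then obtain B where "\<forall>w\<in>h 0 ` S. norm w \<le> B" using compact_imp_bounded bounded_iff by metis
    thus ?thesis using that[of "max B 0"] by fastforce
  qed
  have hb: "norm (h u v) \<le> H0 + L * norm u" if "v \<in> S" for u v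
    using h_lip[OF that, of u 0] H0[OF that] norm_triangle_ineq2[of "h u v" "h 0 v"] by simp
  have cvar: "integrable P (\<lambda>\<omega>. (norm (Mn (Suc k) \<omega>))\<^sup>2 / (r k \<omega>)\<^sup>2)
      \<and> (\<integral>\<omega>. (norm (Mn (Suc k) \<omega>))\<^sup>2 / (r k \<omega>)\<^sup>2 \<partial>P) \<le> K * (1 + (\<integral>\<omega>. (norm (z k \<omega>))\<^sup>2 \<partial>P))"
    if zint: "integrable P (\<lambda>\<omega>. (norm (z k \<omega>))\<^sup>2)" for k
  proof -
    define f where "f \<omega> = 1 / (r k \<omega>)\<^sup>2" for \<omega>
    define g where "g \<omega> = (norm (Mn (Suc k) \<omega>))\<^sup>2" for \<omega>
    have f01: "0 \<le> f \<omega>" "f \<omega> \<le> 1" for \<omega> using r1[of k \<omega>] by (auto simp: f_def power_le_one_iff)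
    have fF: "f \<in> borel_measurable (F k)" unfolding f_def using rF by measurable
    have gP[measurable]: "g \<in> borel_measurable P" unfolding g_def by measurable
    have fgi: "integrable P (\<lambda>\<omega>. f \<omega> * g \<omega>)"
    proof (rule Bochner_Integration.integrable_bound[OF M_sqint[of k]])
      show "(\<lambda>\<omega>. f \<omega> * g \<omega>) \<in> borel_measurable P" using FP[OF fF] by measurable
      show "AE \<omega> in P. norm (f \<omega> * g \<omega>) \<le> norm ((norm (Mn (Suc k) \<omega>))\<^sup>2)"
        using f01 by (auto simp: g_def abs_mult intro!: mult_left_le_one_le)
    qed
    have ce1: "integrable P (\<lambda>\<omega>. f \<omega> * real_cond_exp P (F k) g \<omega>)"
      using sigma_finite_subalgebra.real_cond_exp_intg(1)[OF csub fgi fF gP] .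
    have ce2: "(\<integral>\<omega>. f \<omega> * real_cond_exp P (F k) g \<omega> \<partial>P) = (\<integral>\<omega>. f \<omega> * g \<omega> \<partial>P)"
      using sigma_finite_subalgebra.real_cond_exp_intg(2)[OF csub fgi fF gP] .
    have fi: "integrable P f"
      by (rule integrable_const_bound[of _ 1]) (use f01 FP[OF fF] in auto)
    have rhsi: "integrable P (\<lambda>\<omega>. K * (f \<omega> + (norm (z k \<omega>))\<^sup>2))" using fi zint by auto
    have "AE \<omega> in P. f \<omega> * real_cond_exp P (F k) g \<omega> \<le> K * (f \<omega> + (norm (z k \<omega>))\<^sup>2)"
      using M_var[of k]
    proof (eventually_elim)
      case (elim \<omega>)
      have "f \<omega> * real_cond_exp P (F k) g \<omega> \<le> f \<omega> * (K * (1 + (norm (x k \<omega>))\<^sup>2))"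
        using elim f01 by (intro mult_left_mono) (simp_all add: g_def[abs_def])
      also have "\<dots> = K * (f \<omega> + (norm (z k \<omega>))\<^sup>2)"
        by (simp add: f_def nz power_divide field_simps add_divide_distrib)
      finally show ?case .
    qed
    hence "(\<integral>\<omega>. f \<omega> * real_cond_exp P (F k) g \<omega> \<partial>P) \<le> (\<integral>\<omega>. K * (f \<omega> + (norm (z k \<omega>))\<^sup>2) \<partial>P)"
      by (intro integral_mono_AE ce1 rhsi)
    also have "\<dots> = K * ((\<integral>\<omega>. f \<omega> \<partial>P) + (\<integral>\<omega>. (norm (z k \<omega>))\<^sup>2 \<partial>P))"
      using fi zint by simp
    also have "(\<integral>\<omega>. f \<omega> \<partial>P) \<le> 1"
      using integral_mono[OF fi, of "\<lambda>_. 1"] f01 by (simp add: prob_space)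
    hence "K * ((\<integral>\<omega>. f \<omega> \<partial>P) + (\<integral>\<omega>. (norm (z k \<omega>))\<^sup>2 \<partial>P)) \<le> K * (1 + (\<integral>\<omega>. (norm (z k \<omega>))\<^sup>2 \<partial>P))"
      using K_pos by simp
    finally have "(\<integral>\<omega>. f \<omega> * g \<omega> \<partial>P) \<le> K * (1 + (\<integral>\<omega>. (norm (z k \<omega>))\<^sup>2 \<partial>P))" using ce2 by simp
    moreover have "(\<lambda>\<omega>. f \<omega> * g \<omega>) = (\<lambda>\<omega>. (norm (Mn (Suc k) \<omega>))\<^sup>2 / (r k \<omega>)\<^sup>2)"
      by (simp add: f_def g_def)
    ultimately show ?thesis using fgi by simp
  qed
  define C1 where "C1 = 1 + 6 * L\<^sup>2"
  define C2 where "C2 = 6 * H0\<^sup>2"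
  define C where "C = C1 + C2 + 6 * K"
  have C10: "0 \<le> C1" and C20: "0 \<le> C2" by (simp_all add: C1_def C2_def)
  have C0: "0 \<le> C" using K_pos C10 C20 by (simp add: C_def)
  have zb1: "integrable P (\<lambda>\<omega>. (norm (z k \<omega>))\<^sup>2) \<and> (\<integral>\<omega>. (norm (z k \<omega>))\<^sup>2 \<partial>P) \<le> 1"
    if le1: "\<And>\<omega>. norm (z k \<omega>) \<le> 1" for k
  proof
    have b: "(norm (z k \<omega>))\<^sup>2 \<le> 1" for \<omega> using le1[of \<omega>] by (simp add: power_le_one)
    show zi: "integrable P (\<lambda>\<omega>. (norm (z k \<omega>))\<^sup>2)"
      by (rule integrable_const_bound[of _ 1]) (use b in auto)
    show "(\<integral>\<omega>. (norm (z k \<omega>))\<^sup>2 \<partial>P) \<le> 1"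
      using integral_mono[OF zi, of "\<lambda>_. 1"] b by (simp add: prob_space)
  qed
  have zle1: "norm (z k \<omega>) \<le> 1" if "r k \<omega> = max (norm (x k \<omega>)) 1" for k \<omega>
    using that r1[of k \<omega>] by (simp add: nz divide_le_eq_1 less_max_iff_disj)
  have dk0: "0 \<le> tseq a k - Tseq a T (blk a T k)" for k using blk_props[of k] by simp
  have L2: "integrable P (\<lambda>\<omega>. (norm (z k \<omega>))\<^sup>2) \<and>
      1 + (\<integral>\<omega>. (norm (z k \<omega>))\<^sup>2 \<partial>P) \<le> 2 * exp (C * (tseq a k - Tseq a T (blk a T k)))" for k
  proof (induction k)
    case 0
    have "mb 0 = 0" using mb(1)[of 0] by simp
    hence "norm (z 0 \<omega>) \<le> 1" for \<omega> using zle1 r_eq by metis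
    hence "integrable P (\<lambda>\<omega>. (norm (z 0 \<omega>))\<^sup>2) \<and> (\<integral>\<omega>. (norm (z 0 \<omega>))\<^sup>2 \<partial>P) \<le> 1" using zb1 by blast
    moreover have "1 \<le> exp (C * (tseq a 0 - Tseq a T (blk a T 0)))"
      using mult_nonneg_nonneg[OF C0 dk0[of 0]] by (simp only: one_le_exp_iff)
    ultimately show ?case by linarith
  next
    case (Suc k)
    show ?case
    proof (cases "blk a T (Suc k) = blk a T k")
      case False
      have "r (Suc k) \<omega> = max (norm (x (Suc k) \<omega>)) 1" for \<omega> by (simp add: r_def rfac_change[OF False])
      hence "norm (z (Suc k) \<omega>) \<le> 1" for \<omega> using zle1 by metis
      hence "integrable P (\<lambda>\<omega>. (norm (z (Suc k) \<omega>))\<^sup>2) \<and> (\<integral>\<omega>. (norm (z (Suc k) \<omega>))\<^sup>2 \<partial>P) \<le> 1" using zb1 by blast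
      moreover have "1 \<le> exp (C * (tseq a (Suc k) - Tseq a T (blk a T (Suc k))))"
        using mult_nonneg_nonneg[OF C0 dk0[of "Suc k"]] by (simp only: one_le_exp_iff)
      ultimately show ?thesis by linarith
    next
      case True
      have rs: "r (Suc k) \<omega> = r k \<omega>" for \<omega> by (simp add: r_def True)
      have zi: "integrable P (\<lambda>\<omega>. (norm (z k \<omega>))\<^sup>2)" using Suc.IH by blast
      define E where "E = (\<integral>\<omega>. (norm (z k \<omega>))\<^sup>2 \<partial>P)"
      have E0: "0 \<le> E" unfolding E_def by simp
      have IH: "1 + E \<le> 2 * exp (C * (tseq a k - Tseq a T (blk a T k)))" using Suc.IH E_def by blast
      have mi: "integrable P (\<lambda>\<omega>. (norm (Mn (Suc k) \<omega>))\<^sup>2 / (r k \<omega>)\<^sup>2)"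
        and mb2: "(\<integral>\<omega>. (norm (Mn (Suc k) \<omega>))\<^sup>2 / (r k \<omega>)\<^sup>2 \<partial>P) \<le> K * (1 + E)"
        using cvar[OF zi] E_def by auto
      define \<alpha> where "\<alpha> = a k"
      have al: "0 \<le> \<alpha>" "\<alpha> \<le> 1" using a_pos[of k] a_le1[of k] by (simp_all add: \<alpha>_def)
      define mq where "mq \<omega> = (norm (Mn (Suc k) \<omega>))\<^sup>2 / (r k \<omega>)\<^sup>2" for \<omega>
      have mqi: "integrable P mq" using mi by (simp add: mq_def[abs_def])
      have mqb: "(\<integral>\<omega>. mq \<omega> \<partial>P) \<le> K * (1 + E)" using mb2 by (simp add: mq_def[abs_def])
      define R where "R \<omega> = (1 + \<alpha> * C1) * (norm (z k \<omega>))\<^sup>2 + \<alpha> * C2 + \<alpha> * (6 * mq \<omega>)" for \<omega>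
      have Ri: "integrable P R" unfolding R_def
        by (intro Bochner_Integration.integrable_add integrable_mult_right integrable_const zi mqi)
      have pw: "(norm (z (Suc k) \<omega>))\<^sup>2 \<le> R \<omega>" if \<omega>: "\<omega> \<in> space P" for \<omega>
      proof -
        define hk where "hk = (1 / r k \<omega>) *\<^sub>R h (x k \<omega>) (y k \<omega>)"
        define mk where "mk = (1 / r k \<omega>) *\<^sub>R Mn (Suc k) \<omega>"
        have rpos: "0 < r k \<omega>" using r1[of k \<omega>] by simp
        have zeq: "z (Suc k) \<omega> = z k \<omega> + \<alpha> *\<^sub>R (hk + mk)"
          unfolding z_def hk_def mk_def \<alpha>_def rs x_rec[OF \<omega>] by (simp add: algebra_simps)
        have "norm hk = norm (h (x k \<omega>) (y k \<omega>)) / r k \<omega>" using rpos by (simp add: hk_def)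
        also have "\<dots> \<le> (H0 + L * norm (x k \<omega>)) / r k \<omega>"
          using hb[OF y_in_S[OF \<omega>]] rpos by (simp add: divide_right_mono)
        also have "\<dots> = H0 / r k \<omega> + L * norm (z k \<omega>)" by (simp add: nz add_divide_distrib)
        also have "H0 / r k \<omega> \<le> H0" using r1[of k \<omega>] H00 by (simp add: divide_le_eq mult_le_cancel_left1)
        finally have hkb: "norm hk \<le> H0 + L * norm (z k \<omega>)" by simp
        have "(norm mk)\<^sup>2 = (norm (Mn (Suc k) \<omega>))\<^sup>2 / (r k \<omega>)\<^sup>2"
          using rpos by (simp add: mk_def power_divide)
        thus ?thesis
          using pw_bound[OF al hkb H00 less_imp_le[OF L_pos], of mk] zeq
          by (simp add: R_def C1_def C2_def mq_def)
      qed
      have zsi: "integrable P (\<lambda>\<omega>. (norm (z (Suc k) \<omega>))\<^sup>2)"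
      proof (rule Bochner_Integration.integrable_bound[OF Ri])
        show "(\<lambda>\<omega>. (norm (z (Suc k) \<omega>))\<^sup>2) \<in> borel_measurable P" by measurable
        show "AE \<omega> in P. norm ((norm (z (Suc k) \<omega>))\<^sup>2) \<le> norm (R \<omega>)"
          using pw by (intro AE_I2) (auto intro: order_trans[OF _ abs_ge_self])
      qed
      have "(\<integral>\<omega>. (norm (z (Suc k) \<omega>))\<^sup>2 \<partial>P) \<le> (\<integral>\<omega>. R \<omega> \<partial>P)"
        by (rule integral_mono_AE[OF zsi Ri]) (use pw in \<open>intro AE_I2, auto\<close>)
      also have "(\<integral>\<omega>. R \<omega> \<partial>P) = (1 + \<alpha> * C1) * E + \<alpha> * C2 + \<alpha> * (6 * (\<integral>\<omega>. mq \<omega> \<partial>P))"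
        unfolding R_def E_def using zi mqi by (simp add: prob_space)
      also have "\<dots> \<le> (1 + \<alpha> * C1) * E + \<alpha> * C2 + \<alpha> * (6 * (K * (1 + E)))"
        using mqb al by (intro add_left_mono mult_left_mono) simp_all
      finally have step: "(\<integral>\<omega>. (norm (z (Suc k) \<omega>))\<^sup>2 \<partial>P) \<le> (1 + \<alpha> * C1) * E + \<alpha> * C2 + \<alpha> * (6 * (K * (1 + E)))" .
      have alg: "(1 + \<alpha> * C) * (1 + E) - (1 + ((1 + \<alpha> * C1) * E + \<alpha> * C2 + \<alpha> * (6 * (K * (1 + E))))) = \<alpha> * C1 + \<alpha> * E * C2"
        by (simp add: C_def algebra_simps)
      have "0 \<le> \<alpha> * C1 + \<alpha> * E * C2" using al E0 C10 C20 by simp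
      hence "1 + (\<integral>\<omega>. (norm (z (Suc k) \<omega>))\<^sup>2 \<partial>P) \<le> (1 + \<alpha> * C) * (1 + E)" using step alg by linarith
      also have "\<dots> \<le> exp (\<alpha> * C) * (2 * exp (C * (tseq a k - Tseq a T (blk a T k))))"
        using IH E0 al C0 by (intro mult_mono) (simp_all add: exp_ge_add_one_self)
      also have "\<dots> = 2 * exp (C * (tseq a (Suc k) - Tseq a T (blk a T (Suc k))))"
        by (simp add: True tseq_Suc \<alpha>_def exp_add[symmetric] algebra_simps)
      finally show ?thesis using zsi by blast
    qed
  qed
  define B where "B = 2 * exp (C * (T + 1))"
  have zB: "integrable P (\<lambda>\<omega>. (norm (z k \<omega>))\<^sup>2) \<and> (\<integral>\<omega>. (norm (z k \<omega>))\<^sup>2 \<partial>P) \<le> B" for k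
  proof -
    have e: "exp (C * (tseq a k - Tseq a T (blk a T k))) \<le> exp (C * (T + 1))"
      using blk_len[of k] C0 by (simp add: mult_left_mono)
    have l: "1 + (\<integral>\<omega>. (norm (z k \<omega>))\<^sup>2 \<partial>P) \<le> 2 * exp (C * (tseq a k - Tseq a T (blk a T k)))"
      using L2[of k] by blast
    have "(\<integral>\<omega>. (norm (z k \<omega>))\<^sup>2 \<partial>P) \<le> B" unfolding B_def using e l by linarith
    thus ?thesis using L2[of k] by blast
  qed
  have mB: "integrable P (\<lambda>\<omega>. (norm (Mn (Suc k) \<omega>))\<^sup>2 / (r k \<omega>)\<^sup>2)
      \<and> (\<integral>\<omega>. (norm (Mn (Suc k) \<omega>))\<^sup>2 / (r k \<omega>)\<^sup>2 \<partial>P) \<le> K * (1 + B)" for k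
    using cvar[of k] zB[of k] K_pos by (smt (verit) mult_left_mono)
  define d where "d i k \<omega> = (a k / r k \<omega>) * (Mn (Suc k) \<omega> \<bullet> i)" for i :: 'd and k \<omega>
  have dsqb: "(d i k \<omega>)\<^sup>2 \<le> (a k)\<^sup>2 * ((norm (Mn (Suc k) \<omega>))\<^sup>2 / (r k \<omega>)\<^sup>2)" if i: "i \<in> Basis" for i k \<omega>
  proof -
    have "(Mn (Suc k) \<omega> \<bullet> i)\<^sup>2 \<le> (norm (Mn (Suc k) \<omega>))\<^sup>2"
      using power_mono[where n=2, OF Basis_le_norm[OF i] abs_ge_zero] by simp
    hence "(Mn (Suc k) \<omega> \<bullet> i)\<^sup>2 / (r k \<omega>)\<^sup>2 \<le> (norm (Mn (Suc k) \<omega>))\<^sup>2 / (r k \<omega>)\<^sup>2"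
      by (rule divide_right_mono) simp
    hence "(a k)\<^sup>2 * ((Mn (Suc k) \<omega> \<bullet> i)\<^sup>2 / (r k \<omega>)\<^sup>2) \<le> (a k)\<^sup>2 * ((norm (Mn (Suc k) \<omega>))\<^sup>2 / (r k \<omega>)\<^sup>2)"
      by (rule mult_left_mono) simp
    moreover have "(d i k \<omega>)\<^sup>2 = (a k)\<^sup>2 * ((Mn (Suc k) \<omega> \<bullet> i)\<^sup>2 / (r k \<omega>)\<^sup>2)"
      by (simp add: d_def power_divide power_mult_distrib)
    ultimately show ?thesis by simp
  qed
  have dP[measurable]: "d i k \<in> borel_measurable P" for i k unfolding d_def by measurable
  have dsqi: "integrable P (\<lambda>\<omega>. (d i k \<omega>)\<^sup>2)" if i: "i \<in> Basis" for i k
  proof (rule Bochner_Integration.integrable_bound[of _ "\<lambda>\<omega>. (norm (Mn (Suc k) \<omega>))\<^sup>2 / (r k \<omega>)\<^sup>2"])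
    show "integrable P (\<lambda>\<omega>. (norm (Mn (Suc k) \<omega>))\<^sup>2 / (r k \<omega>)\<^sup>2)" using mB by blast
    show "(\<lambda>\<omega>. (d i k \<omega>)\<^sup>2) \<in> borel_measurable P" by measurable
    show "AE \<omega> in P. norm ((d i k \<omega>)\<^sup>2) \<le> norm ((norm (Mn (Suc k) \<omega>))\<^sup>2 / (r k \<omega>)\<^sup>2)"
    proof (intro AE_I2)
      fix \<omega>
      have a2: "(a k)\<^sup>2 \<le> 1" using a_pos[of k] a_le1[of k] by (simp add: power_le_one)
      have "(d i k \<omega>)\<^sup>2 \<le> (a k)\<^sup>2 * ((norm (Mn (Suc k) \<omega>))\<^sup>2 / (r k \<omega>)\<^sup>2)" by (rule dsqb[OF i])
      also have "\<dots> \<le> 1 * ((norm (Mn (Suc k) \<omega>))\<^sup>2 / (r k \<omega>)\<^sup>2)"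
        by (rule mult_right_mono[OF a2]) simp
      finally show "norm ((d i k \<omega>)\<^sup>2) \<le> norm ((norm (Mn (Suc k) \<omega>))\<^sup>2 / (r k \<omega>)\<^sup>2)" by simp
    qed
  qed
  have md: "mdiff P F (d i)" if i: "i \<in> Basis" for i
  proof (rule mdiff.intro)
    show "prob_space P" by (rule prob)
    show "subalgebra P (F k)" for k by (rule subalg)
    show "sets (F k) \<subseteq> sets (F j)" if "k \<le> j" for k j using filtration.sets_F_mono[OF filt that] .
    show "d i k \<in> borel_measurable (F (Suc k))" for k
    proof -
      have [measurable]: "r k \<in> borel_measurable (F (Suc k))" using filt_mono[OF filt _ rF[of k]] by simp
      have [measurable]: "Mn (Suc k) \<in> borel_measurable (F (Suc k))" by (rule M_meas)
      show ?thesis unfolding d_def by measurable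
    qed
    show "integrable P (\<lambda>\<omega>. (d i k \<omega>)\<^sup>2)" for k by (rule dsqi[OF i])
    show "(\<integral>\<omega>. g \<omega> * d i k \<omega> \<partial>P) = 0"
      if gF: "g \<in> borel_measurable (F k)" and gi: "integrable P (\<lambda>\<omega>. g \<omega> * d i k \<omega>)" for k g
    proof -
      define f where "f \<omega> = g \<omega> * (a k / r k \<omega>)" for \<omega>
      define u where "u \<omega> = Mn (Suc k) \<omega> \<bullet> i" for \<omega>
      have fF: "f \<in> borel_measurable (F k)" unfolding f_def using gF rF[of k] by measurable
      have uP: "u \<in> borel_measurable P" unfolding u_def by measurable
      have eq: "(\<lambda>\<omega>. g \<omega> * d i k \<omega>) = (\<lambda>\<omega>. f \<omega> * u \<omega>)" by (auto simp: f_def u_def d_def)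
      have fui: "integrable P (\<lambda>\<omega>. f \<omega> * u \<omega>)" using gi eq by simp
      have "(\<integral>\<omega>. f \<omega> * u \<omega> \<partial>P) = (\<integral>\<omega>. f \<omega> * real_cond_exp P (F k) u \<omega> \<partial>P)"
        using sigma_finite_subalgebra.real_cond_exp_intg(2)[OF csub fui fF uP] by simp
      also have "\<dots> = (\<integral>\<omega>. 0 \<partial>P)"
      proof (rule integral_cong_AE)
        show "(\<lambda>\<omega>. f \<omega> * real_cond_exp P (F k) u \<omega>) \<in> borel_measurable P" using FP[OF fF] by measurable
        show "(\<lambda>\<omega>. 0::real) \<in> borel_measurable P" by simp
        show "AE \<omega> in P. f \<omega> * real_cond_exp P (F k) u \<omega> = 0"
          using M_mds[OF i, of k] by (auto simp: u_def[abs_def])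
      qed
      finally show ?thesis using eq by simp
    qed
  qed
  have summ: "summable (\<lambda>k. \<integral>\<omega>. (d i k \<omega>)\<^sup>2 \<partial>P)" if i: "i \<in> Basis" for i
  proof (rule summable_comparison_test[OF _ summable_mult[OF a_sq, of "K * (1 + B)"]])
    show "\<exists>N. \<forall>n\<ge>N. norm (\<integral>\<omega>. (d i n \<omega>)\<^sup>2 \<partial>P) \<le> K * (1 + B) * (a n)\<^sup>2"
    proof (intro exI allI impI)
      fix n :: nat
      have mi: "integrable P (\<lambda>\<omega>. (norm (Mn (Suc n) \<omega>))\<^sup>2 / (r n \<omega>)\<^sup>2)"
        and mb: "(\<integral>\<omega>. (norm (Mn (Suc n) \<omega>))\<^sup>2 / (r n \<omega>)\<^sup>2 \<partial>P) \<le> K * (1 + B)" using mB[of n] by auto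
      have "(\<integral>\<omega>. (d i n \<omega>)\<^sup>2 \<partial>P) \<le> (\<integral>\<omega>. (a n)\<^sup>2 * ((norm (Mn (Suc n) \<omega>))\<^sup>2 / (r n \<omega>)\<^sup>2) \<partial>P)"
        by (rule integral_mono[OF dsqi[OF i] integrable_mult_right[OF mi]]) (rule dsqb[OF i])
      also have "\<dots> = (a n)\<^sup>2 * (\<integral>\<omega>. (norm (Mn (Suc n) \<omega>))\<^sup>2 / (r n \<omega>)\<^sup>2 \<partial>P)"
        by (rule integral_mult_right_zero)
      also have "\<dots> \<le> (a n)\<^sup>2 * (K * (1 + B))" using mb by (rule mult_left_mono) simp
      finally show "norm (\<integral>\<omega>. (d i n \<omega>)\<^sup>2 \<partial>P) \<le> K * (1 + B) * (a n)\<^sup>2" by (simp add: mult.commute)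
    qed
  qed
  have conv: "AE \<omega> in P. convergent (\<lambda>n. \<Sum>k<n. d i k \<omega>)" if i: "i \<in> Basis" for i
  proof -
    interpret mi: mdiff P F "d i" by (rule md[OF i])
    show ?thesis using mi.ae_conv[OF summ[OF i]] unfolding mi.S_def .
  qed
  have "AE \<omega> in P. \<forall>i\<in>Basis. convergent (\<lambda>n. \<Sum>k<n. d i k \<omega>)"
    by (rule eventually_ball_finite) (auto intro: conv)
  thus ?thesis
  proof (rule eventually_mono)
    fix \<omega> assume H: "\<forall>i\<in>Basis. convergent (\<lambda>n. \<Sum>k<n. d i k \<omega>)"
    have comp: "zeta_hat a T (\<lambda>k. x k \<omega>) (\<lambda>k. Mn k \<omega>) n \<bullet> i = (\<Sum>k<n. d i k \<omega>)" for n i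
      by (simp add: zeta_hat_def Mhat_def r_def d_def inner_sum_left)
    have "(\<lambda>n. zeta_hat a T (\<lambda>k. x k \<omega>) (\<lambda>k. Mn k \<omega>) n) = (\<lambda>n. \<Sum>i\<in>Basis. (\<Sum>k<n. d i k \<omega>) *\<^sub>R i)"
      by (rule ext, subst euclidean_representation[symmetric]) (simp add: comp)
    moreover have "convergent (\<lambda>n. \<Sum>i\<in>Basis. (\<Sum>k<n. d i k \<omega>) *\<^sub>R i)"
    proof (rule convergent_sum)
      fix i :: 'd assume "i \<in> Basis"
      then obtain l where "(\<lambda>n. \<Sum>k<n. d i k \<omega>) \<longlonglongrightarrow> l" using H by (auto simp: convergent_def)
      hence "(\<lambda>n. (\<Sum>k<n. d i k \<omega>) *\<^sub>R i) \<longlonglongrightarrow> l *\<^sub>R i" by (intro tendsto_scaleR tendsto_const)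
      thus "convergent (\<lambda>n. (\<Sum>k<n. d i k \<omega>) *\<^sub>R i)" by (auto simp: convergent_def)
    qed
    ultimately show "convergent (\<lambda>n. zeta_hat a T (\<lambda>k. x k \<omega>) (\<lambda>k. Mn k \<omega>) n)" by simp
  qed


qed


end
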